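(* Let $(\epsilon_\ell)_{\ell\in\mathbb{N}}$ be independent random variables, each exponentially distributed with parameter $1$. For $m\in\mathbb{N}$ let $Y_m$ be a random variable on $[0,1]$ with density $f_m(q)=2\sum_{\ell=1}^{m}(-1)^{\ell-1}\frac{\binom{m}{\ell}}{\binom{m+\ell}{m}}\ell^2q^{\ell^2-1}$, and let $W$ be a random variable on $[0,1]$ with $\mathbb{P}\{W\le q\}=1-\Theta(q)$ for $0\le q<1$, where $\Theta(q)=\sum_{n\in\mathbb{Z}}(-1)^nq^{n^2}$. Then \[ Y_m\overset{d}{=}\exp\Big(-\sum_{\ell=1}^{m}\frac{\epsilon_\ell}{\ell^2}\Big),\qquad W\overset{d}{=}\exp\Big(-\sum_{\ell=1}^{\infty}\frac{\epsilon_\ell}{\ell^2}\Big). \]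
   Context: $Y_m$ and $W$ arise as limit laws of the number of remaining white balls in the urn where, from $n'$ white and $m'$ black balls, a white ball is drawn with probability $n'/(n'+m'^2)$ and a black one otherwise (drawn balls discarded); this interpretation is not needed for the statement. $\overset{d}{=}$ denotes equality in distribution. *)

theory Defs
  imports "HOL-Probability.Probability"
begin

definition f_dens :: "nat \<Rightarrow> real \<Rightarrow> real" where
  "f_dens m q = 2 * (\<Sum>l=1..m. (-1) ^ (l - 1) * (real (m choose l) / real ((m + l) choose m))
                      * real (l^2) * q ^ (l^2 - 1))"

definition Theta :: "real \<Rightarrow> real" where
  "Theta q = (\<Sum>\<^sub>\<infinity> n::int. (-1::real) ^ nat \<bar>n\<bar> * q ^ nat (n^2))"

end

theory Submission
  imports Defs "HOL-Real_Asymp.Real_Asymp"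
begin



definition rr :: "nat \<Rightarrow> nat \<Rightarrow> real" where
  "rr m l = fact m ^ 2 / (fact (m - l) * fact (m + l))"

definition dd :: "nat \<Rightarrow> nat \<Rightarrow> real" where
  "dd m l = 2 * (-1) ^ (l - 1) * (real (m choose l) / real ((m + l) choose m))"

lemma choose_ratio: "l \<le> m \<Longrightarrow> real (m choose l) / real ((m + l) choose m) = rr m l"
  by (simp add: binomial_fact rr_def field_simps power2_eq_square)

lemma dd_rr: "l \<le> m \<Longrightarrow> dd m l = 2 * (-1) ^ (l - 1) * rr m l"
  by (simp add: dd_def choose_ratio)

lemma rr_Suc_l: "l < m \<Longrightarrow> rr m (Suc l) = rr m l * (real m - real l) / (real m + real l + 1)"
proof -
  assume "l < m"
  then have a: "m - l = Suc (m - Suc l)" by simp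
  have "fact (m - l) = (real m - real l) * fact (m - Suc l)"
    using \<open>l<m\<close> by (subst a) (simp add: of_nat_diff)
  moreover have "fact (m + Suc l) = (real m + real l + 1) * (fact (m + l) :: real)"
    by simp
  moreover have "real m - real l > 0" using \<open>l<m\<close> by simp
  ultimately show ?thesis unfolding rr_def
    by (simp only: Suc_eq_plus1[symmetric]) (simp add: divide_simps)
qed

lemma rr_Suc_m: "l \<le> n \<Longrightarrow> rr (Suc n) l = rr n l * (real (Suc n))^2 / ((real (Suc n) - real l) * (real (Suc n) + real l))"
proof -
  assume "l \<le> n"
  then have a: "Suc n - l = Suc (n - l)" by simp
  have "fact (Suc n - l) = (real (Suc n) - real l) * fact (n - l)"
    using \<open>l\<le>n\<close> by (subst a) (simp add: of_nat_diff)
  moreover have "fact (Suc n + l) = (real (Suc n) + real l) * (fact (n + l) :: real)"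
    by (simp add: add.commute)
  moreover have "real (Suc n) - real l > 0" using \<open>l\<le>n\<close> by simp
  ultimately show ?thesis unfolding rr_def
    by (simp only:) (simp add: divide_simps)
qed

lemma rr_0: "rr m 0 = 1"
  by (simp add: rr_def power2_eq_square)

lemma rr_bounds: "l \<le> m \<Longrightarrow> 0 \<le> rr m l \<and> rr m l \<le> 1"
proof (induction l)
  case 0 then show ?case by (simp add: rr_0)
next
  case (Suc l)
  then have "0 \<le> rr m l" "rr m l \<le> 1" "l < m" by auto
  moreover have "0 \<le> (real m - real l) / (real m + real l + 1)" "(real m - real l) / (real m + real l + 1) \<le> 1"
    using \<open>l < m\<close> by auto
  ultimately show ?case
    using mult_mono[of "rr m l" 1 "(real m - real l) / (real m + real l + 1)" 1]
    by (simp add: rr_Suc_l)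
qed

lemma rr_lim: "(\<lambda>m. rr m l) \<longlonglongrightarrow> 1"
proof (induction l)
  case 0 then show ?case by (simp add: rr_0)
next
  case (Suc l)
  have "(\<lambda>m. (real m - real l) / (real m + real l + 1)) \<longlonglongrightarrow> 1"
    by real_asymp
  from tendsto_mult[OF Suc this] have "(\<lambda>m. rr m l * ((real m - real l) / (real m + real l + 1))) \<longlonglongrightarrow> 1"
    by simp
  then show ?case
    apply (rule Lim_transform_eventually)
    using eventually_gt_at_top[of l] by eventually_elim (simp add: rr_Suc_l)
qed

lemma alt_partial: "(\<Sum>k\<le>j. (-1::real) ^ k * real (Suc n choose k)) = (-1) ^ j * real (n choose j)"
proof (induction j)
  case 0 then show ?case by simp
next
  case (Suc j)
  then show ?case by (simp add: field_simps)
qed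

lemma sum_dd: assumes "m \<ge> 1" shows "(\<Sum>l=1..m. dd m l) = 1"
proof -
  obtain n where m: "m = Suc n" using assms by (cases m) auto
  have c2: "real ((2*m) choose m) = 2 * real ((2*n+1) choose n)"
  proof -
    have "(2*m) choose m = ((2*n+1) choose (Suc n)) + ((2*n+1) choose n)"
      by (simp add: m)
    moreover have "(2*n+1) choose (Suc n) = (2*n+1) choose n"
      using binomial_symmetric[of "Suc n" "2*n+1"] by simp
    ultimately show ?thesis by simp
  qed
  have rr_c: "rr m l = real ((2*m) choose (m+l)) / real ((2*m) choose m)" if "l \<le> m" for l
  proof -
    have "2*m - (m+l) = m - l" by simp
    then show ?thesis using that unfolding rr_def
      by (simp add: binomial_fact field_simps power2_eq_square mult_2)
  qed
  have "(\<Sum>l=1..m. dd m l) = (\<Sum>l=1..m. 2 * (-1) ^ (l - 1) * real ((2*m) choose (m+l))) / real ((2*m) choose m)"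
    by (simp add: dd_rr rr_c sum_divide_distrib)
  also have "(\<Sum>l=1..m. 2 * (-1) ^ (l - 1) * real ((2*m) choose (m+l))) = (\<Sum>k\<le>n. 2 * (-1) ^ n * ((-1)^k * real ((2*m) choose k)))"
  proof (rule sum.reindex_bij_witness[where i="\<lambda>k. m - k" and j="\<lambda>l. m - l"])
    fix l assume l: "l \<in> {1..m}"
    have "((2*m) choose (m - l)) = (2*m) choose (m + l)"
    proof -
      have e: "m + l = (2*m) - (m - l)" using l m by simp
      have "m - l \<le> 2*m" using l m by simp
      then show ?thesis by (simp only: e) (rule binomial_symmetric)
    qed
    moreover have "(-1::real)^n * (-1)^(m - l) = (-1)^(l - 1)"
    proof -
      have e: "n + (m - l) = 2*(m-l) + (l-1)" using l m by auto
      have "(-1::real)^n * (-1)^(m - l) = (-1)^(n + (m-l))" by (simp add: power_add)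
      also have "\<dots> = (-1)^(l-1)" unfolding e by (simp add: power_add power_mult)
      finally show ?thesis .
    qed
    ultimately show "2 * (-1) ^ n * ((-1)^(m - l) * real ((2*m) choose (m - l))) = 2 * (-1) ^ (l - 1) * real ((2*m) choose (m + l))"
      by (metis mult.assoc)
  qed (use m in auto)
  also have "\<dots> = 2 * (-1)^n * (\<Sum>k\<le>n. (-1)^k * real (Suc (2*n+1) choose k))"
    by (simp add: sum_distrib_left m)
  also have "\<dots> = 2 * real ((2*n+1) choose n)"
    by (simp add: alt_partial flip: power_add)
  finally show ?thesis using c2 by simp
qed




locale urn = prob_space M for M :: "'a measure" +
  fixes eps :: "nat \<Rightarrow> 'a \<Rightarrow> real"
  assumes indep: "indep_vars (\<lambda>_. borel) eps UNIV"
    and expo: "\<And>l. distributed M lborel (eps l) (exponential_density 1)"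
begin

definition T :: "nat \<Rightarrow> 'a \<Rightarrow> real" where
  "T m x = (\<Sum>l=1..m. eps l x / real l ^ 2)"

definition Phi :: "nat \<Rightarrow> real \<Rightarrow> real" where
  "Phi m s = (if s \<le> 0 then 1 else (\<Sum>l=1..m. dd m l * exp (- (real l ^ 2) * s)))"

lemma Phi_meas[measurable]: "Phi m \<in> borel_measurable borel"
  unfolding Phi_def by measurable

lemma eps_meas[measurable]: "eps l \<in> borel_measurable M"
  using distributed_measurable[OF expo[of l]] by simp

lemma T_meas[measurable]: "T m \<in> borel_measurable M"
  unfolding T_def by measurable

lemma eps_nonneg: "AE x in M. 0 \<le> eps l x"
  using distributed_AE2[OF expo[of l], of "\<lambda>x. 0 \<le> x"]
  by (auto simp: exponential_density_def)

lemma eps_nonneg_all: "AE x in M. \<forall>l. 0 \<le> eps l x"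
  using eps_nonneg by (simp add: AE_all_countable)

lemma T_nonneg: "AE x in M. 0 \<le> T m x"
  using eps_nonneg_all by eventually_elim (auto simp: T_def intro!: sum_nonneg)

lemma T_Suc: "T (Suc m) x = eps (Suc m) x / real (Suc m) ^ 2 + T m x"
  by (simp add: T_def)

lemma indep_step: "indep_var borel (\<lambda>x. eps (Suc m) x / real (Suc m) ^ 2) borel (T m)"
proof -
  have "indep_vars (\<lambda>_. borel) (\<lambda>i x. eps i x / real i ^ 2) UNIV"
    by (rule indep_vars_compose2[OF indep]) measurable
  then have "indep_vars (\<lambda>_. borel) (\<lambda>i x. eps i x / real i ^ 2) (insert (Suc m) {1..m})"
    by (rule indep_vars_subset) auto
  from indep_vars_sum[OF _ _ this] show ?thesis
    by (simp add: T_def[abs_def])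
qed

lemma Z_distr: assumes "n \<ge> 1"
  shows "distributed M lborel (\<lambda>x. eps n x / real n ^ 2) (exponential_density (real n ^ 2))"
proof -
  have "distributed M lborel (\<lambda>x. (1 / real n ^ 2) * eps n x) (erlang_density 0 (1 / (1 / real n ^ 2)))"
    by (rule erlang_distributed_mult_const[OF expo]) (use assms in auto)
  moreover have "(\<lambda>x. (1 / real n ^ 2) * eps n x) = (\<lambda>x. eps n x / real n ^ 2)" by auto
  ultimately show ?thesis by simp
qed

end


context urn begin

lemma step:
  assumes IH: "\<And>u. prob {x\<in>space M. u \<le> T m x} = Phi m u" and s: "0 < s"
  shows "prob {x\<in>space M. s \<le> T (Suc m) x} = Phi (Suc m) s"
proof -
  define n where "n = Suc m"
  define Z where "Z = (\<lambda>x. eps n x / real n ^ 2)"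
  define X where "X = T m"
  define g where "g = exponential_density (real n ^ 2)"
  define k where "k = (\<lambda>z. real n ^ 2 * exp (- (real n ^ 2) * z) * (\<Sum>l=1..m. dd m l * exp (- (real l ^ 2) * (s - z))))"
  define F where "F = (\<lambda>z. \<Sum>l=1..m. dd m l * real n ^ 2 * exp (- (real l ^ 2) * s) * exp ((real l ^ 2 - real n ^ 2) * z) / (real l ^ 2 - real n ^ 2))"
  have ne: "real l ^ 2 - real n ^ 2 \<noteq> 0" if "l \<in> {1..m}" for l
    using that by (simp add: n_def)
  have Fder: "(F has_real_derivative k z) (at z)" for z
  proof -
    have "(F has_real_derivative (\<Sum>l=1..m. dd m l * real n ^ 2 * exp (- (real l ^ 2) * s) * exp ((real l ^ 2 - real n ^ 2) * z))) (at z)"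
      unfolding F_def
    proof (rule DERIV_sum)
      fix l assume l: "l \<in> {1..m}"
      define a where "a = real l ^ 2 - real n ^ 2"
      define c where "c = dd m l * real n ^ 2 * exp (- (real l ^ 2) * s)"
      have "((\<lambda>z. c * exp (a * z) / a) has_real_derivative c * (exp (a * z) * a) / a) (at z)"
        by (auto intro!: derivative_eq_intros)
      moreover have "c * (exp (a * z) * a) / a = c * exp (a * z)" using ne[OF l] by (simp add: a_def)
      ultimately show "((\<lambda>z. dd m l * real n ^ 2 * exp (- (real l ^ 2) * s) * exp ((real l ^ 2 - real n ^ 2) * z) / (real l ^ 2 - real n ^ 2)) has_real_derivative
          dd m l * real n ^ 2 * exp (- (real l ^ 2) * s) * exp ((real l ^ 2 - real n ^ 2) * z)) (at z)"
        by (simp add: a_def c_def)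
    qed
    moreover have "(\<Sum>l=1..m. dd m l * real n ^ 2 * exp (- (real l ^ 2) * s) * exp ((real l ^ 2 - real n ^ 2) * z)) = k z"
      unfolding k_def sum_distrib_left
    proof (rule sum.cong)
      fix l
      have "exp (- (real l ^ 2) * s) * exp ((real l ^ 2 - real n ^ 2) * z) = exp (- (real n ^ 2) * z) * exp (- (real l ^ 2) * (s - z))"
        by (simp flip: exp_add add: algebra_simps)
      then show "dd m l * real n ^ 2 * exp (- (real l ^ 2) * s) * exp ((real l ^ 2 - real n ^ 2) * z) =
         real n ^ 2 * exp (- (real n ^ 2) * z) * (dd m l * exp (- (real l ^ 2) * (s - z)))"
        by (metis (no_types, lifting) mult.assoc mult.left_commute)
    qed simp
    ultimately show ?thesis by simp
  qed
  have [measurable]: "Z \<in> borel_measurable M" "X \<in> borel_measurable M"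
    unfolding Z_def X_def by measurable
  have [measurable]: "g \<in> borel_measurable borel" unfolding g_def by measurable
  have Zd: "distributed M lborel Z (\<lambda>x. ennreal (g x))"
    unfolding Z_def g_def using Z_distr[of n] by (simp add: n_def)
  have Phi_nn: "0 \<le> Phi m u" for u using IH[of u, symmetric] by simp
  have g_nn: "0 \<le> g z" for z unfolding g_def by (simp add: exponential_density_def)
  have knn: "0 \<le> k z" if z: "z \<in> {0..s}" for z
  proof -
    show "0 \<le> k z"
    proof (cases "z = s")
      case True
      have "0 \<le> (\<Sum>l=1..m. dd m l)"
        using sum_dd[of m] by (cases "m = 0") auto
      then show ?thesis using True by (simp add: k_def)
    next
      case False
      then have "k z = g z * Phi m (s - z)" using z
        by (simp add: g_def k_def exponential_density_def Phi_def mult_ac)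
      then show ?thesis using g_nn Phi_nn by simp
    qed
  qed
  have Fint: "(k has_integral F s - F 0) {0..s}"
    proof (rule fundamental_theorem_of_calculus)
      show "0 \<le> s" using s by simp
      fix z :: real
      have "(F has_real_derivative k z) (at z)" by (rule Fder)
      then show "(F has_vector_derivative k z) (at z within {0..s})"
        by (simp add: has_real_derivative_iff_has_vector_derivative has_vector_derivative_at_within)
    qed
  have F_nn: "0 \<le> F s - F 0"
    using has_integral_nonneg[OF Fint] knn by auto
  have ind: "indep_var borel Z borel X"
    unfolding Z_def X_def n_def by (rule indep_step)
  have "emeasure M {x\<in>space M. s \<le> T (Suc m) x} = emeasure (distr M borel (\<lambda>x. Z x + X x)) {s..}"
    by (subst emeasure_distr) (auto simp: Z_def X_def n_def T_Suc intro!: arg_cong[where f="emeasure M"])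
  also have "distr M borel (\<lambda>x. Z x + X x) = (distr M borel Z \<star> distr M borel X)"
    by (rule sum_indep_random_variable[OF ind]) auto
  also have "emeasure (distr M borel Z \<star> distr M borel X) {s..} =
      \<integral>\<^sup>+z. emeasure (distr M borel X) {a. a + z \<in> {s..}} \<partial>distr M borel Z"
    by (rule convolution_emeasure) (auto intro!: prob_space.finite_measure prob_space_distr)
  also have "\<dots> = \<integral>\<^sup>+z. ennreal (Phi m (s - z)) \<partial>distr M borel Z"
  proof (rule nn_integral_cong)
    fix z
    have "emeasure (distr M borel X) {a. a + z \<in> {s..}} = emeasure M {x\<in>space M. s - z \<le> T m x}"
      by (subst emeasure_distr) (auto simp: X_def intro!: arg_cong[where f="emeasure M"])
    also have "\<dots> = ennreal (Phi m (s - z))"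
      by (simp add: emeasure_eq_measure IH)
    finally show "emeasure (distr M borel X) {a. a + z \<in> {s..}} = ennreal (Phi m (s - z))" .
  qed
  also have "distr M borel Z = density lborel (\<lambda>x. ennreal (g x))"
    using distributed_distr_eq_density[OF Zd] by (simp cong: distr_cong)
  also have "(\<integral>\<^sup>+z. ennreal (Phi m (s - z)) \<partial>density lborel (\<lambda>x. ennreal (g x))) =
      \<integral>\<^sup>+z. ennreal (g z * Phi m (s - z)) \<partial>lborel"
    by (subst nn_integral_density) (auto simp: ennreal_mult' g_nn Phi_nn)
  also have "\<dots> = \<integral>\<^sup>+z. ennreal (indicator {s<..} z * g z) + ennreal (indicator {0..s} z * k z) \<partial>lborel"
  proof (rule nn_integral_cong_AE)
    show "AE z in lborel. ennreal (g z * Phi m (s - z)) = ennreal (indicator {s<..} z * g z) + ennreal (indicator {0..s} z * k z)"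
      using AE_lborel_singleton[of s]
    proof eventually_elim
      case (elim z)
      consider "z < 0" | "0 \<le> z" "z < s" | "s < z" using elim by linarith
      then show ?case
      proof cases
        case 1 then show ?thesis by (simp add: g_def exponential_density_def)
      next
        case 2
        then have "g z * Phi m (s - z) = k z"
          by (simp add: g_def k_def exponential_density_def Phi_def mult_ac)
        then show ?thesis using 2 by simp
      next
        case 3 then show ?thesis by (simp add: Phi_def)
      qed
    qed
  qed
  also have "\<dots> = (\<integral>\<^sup>+z. ennreal (indicator {s<..} z * g z) \<partial>lborel) + (\<integral>\<^sup>+z. ennreal (indicator {0..s} z * k z) \<partial>lborel)"
    by (rule nn_integral_add) (auto simp: k_def)
  also have "(\<integral>\<^sup>+z. ennreal (indicator {s<..} z * g z) \<partial>lborel) = ennreal (exp (- s * real n ^ 2))"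
  proof -
    have "(\<integral>\<^sup>+z. ennreal (indicator {s<..} z * g z) \<partial>lborel) = emeasure (density lborel (\<lambda>x. ennreal (g x))) {s<..}"
      by (subst emeasure_density) (auto intro!: nn_integral_cong simp: indicator_def)
    also have "density lborel (\<lambda>x. ennreal (g x)) = distr M lborel Z"
      using distributed_distr_eq_density[OF Zd] by simp
    also have "emeasure (distr M lborel Z) {s<..} = emeasure M {x\<in>space M. s < Z x}"
      by (subst emeasure_distr) (auto intro!: arg_cong[where f="emeasure M"])
    also have "\<dots> = ennreal (exp (- s * real n ^ 2))"
      using exponential_distributedD_gt[of Z "real n ^ 2" s] Zd s
      by (simp add: emeasure_eq_measure g_def n_def)
    finally show ?thesis .
  qed
  also have "(\<integral>\<^sup>+z. ennreal (indicator {0..s} z * k z) \<partial>lborel) = ennreal (F s - F 0)"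
    by (rule nn_integral_has_integral_lebesgue[OF knn Fint])
  finally have em: "emeasure M {x\<in>space M. s \<le> T (Suc m) x} = ennreal (exp (- s * real n ^ 2)) + ennreal (F s - F 0)" .
  have dd_rec: "dd n l = dd m l * real n ^ 2 / (real n ^ 2 - real l ^ 2)" if l: "l \<in> {1..m}" for l
  proof -
    have "(real (Suc m) - real l) * (real (Suc m) + real l) = real n ^ 2 - real l ^ 2"
      by (simp add: n_def power2_eq_square algebra_simps)
    then show ?thesis using l
      by (simp add: dd_rr rr_Suc_m n_def)
  qed
  have trm: "dd m l * real n ^ 2 * exp (- (real l ^ 2) * s) * exp ((real l ^ 2 - real n ^ 2) * s) / (real l ^ 2 - real n ^ 2)
      - dd m l * real n ^ 2 * exp (- (real l ^ 2) * s) * exp ((real l ^ 2 - real n ^ 2) * 0) / (real l ^ 2 - real n ^ 2)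
      = dd n l * (exp (- (real l ^ 2) * s) - exp (- (real n ^ 2) * s))" if l: "l \<in> {1..m}" for l
  proof -
    have e: "exp (- (real l ^ 2) * s) * exp ((real l ^ 2 - real n ^ 2) * s) = exp (- (real n ^ 2) * s)"
      by (simp flip: exp_add add: algebra_simps)
    have ne2: "real n ^ 2 - real l ^ 2 \<noteq> 0" using ne[OF l] by simp
    have aux: "c * E1 * E / a - c * E1 * 1 / a = (c / b) * (E1 - En)"
      if "a \<noteq> 0" "b \<noteq> 0" "E1 * E = En" "b = - a" for a b c E1 E En :: real
      using that by (auto simp: field_simps)
    have "dd m l * real n ^ 2 * exp (- (real l ^ 2) * s) * exp ((real l ^ 2 - real n ^ 2) * s) / (real l ^ 2 - real n ^ 2)
      - dd m l * real n ^ 2 * exp (- (real l ^ 2) * s) * 1 / (real l ^ 2 - real n ^ 2)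
      = (dd m l * real n ^ 2 / (real n ^ 2 - real l ^ 2)) * (exp (- (real l ^ 2) * s) - exp (- (real n ^ 2) * s))"
      by (rule aux[OF ne[OF l] ne2 e]) simp
    then show ?thesis by (simp add: dd_rec[OF l])
  qed
  have FF: "F s - F 0 = (\<Sum>l=1..m. dd n l * (exp (- (real l ^ 2) * s) - exp (- (real n ^ 2) * s)))"
    unfolding F_def sum_subtractf[symmetric]
  proof (rule sum.cong)
    fix l assume l: "l \<in> {1..m}"
    show "dd m l * real n ^ 2 * exp (- (real l ^ 2) * s) * exp ((real l ^ 2 - real n ^ 2) * s) / (real l ^ 2 - real n ^ 2)
      - dd m l * real n ^ 2 * exp (- (real l ^ 2) * s) * exp ((real l ^ 2 - real n ^ 2) * 0) / (real l ^ 2 - real n ^ 2)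
      = dd n l * (exp (- (real l ^ 2) * s) - exp (- (real n ^ 2) * s))" by (rule trm[OF l])
  qed simp
  have ddn: "dd n n = 1 - (\<Sum>l=1..m. dd n l)"
    using sum_dd[of n] by (simp add: n_def)
  have alg: "Phi n s = exp (- s * real n ^ 2) + (F s - F 0)"
  proof -
    have "Phi n s = (\<Sum>l=1..m. dd n l * exp (- (real l ^ 2) * s)) + dd n n * exp (- (real n ^ 2) * s)"
      using s by (simp add: Phi_def n_def)
    also have "\<dots> = exp (- s * real n ^ 2) + (F s - F 0)"
      unfolding FF ddn by (simp add: algebra_simps sum_subtractf sum_distrib_right)
    finally show ?thesis .
  qed
  have "ennreal (prob {x\<in>space M. s \<le> T (Suc m) x}) = ennreal (Phi n s)"
    using em F_nn by (simp add: emeasure_eq_measure alg ennreal_plus)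
  moreover have "0 \<le> Phi n s" using F_nn alg by simp
  ultimately show ?thesis by (simp add: n_def)
qed

lemma T_tail: "prob {x\<in>space M. s \<le> T m x} = Phi m s"
proof (induction m arbitrary: s)
  case 0
  show ?case by (cases "s \<le> 0") (auto simp: T_def Phi_def prob_space)
next
  case (Suc m)
  show ?case
  proof (cases "s \<le> 0")
    case True
    have "AE x in M. s \<le> T (Suc m) x"
      using T_nonneg[of "Suc m"] by eventually_elim (use True in auto)
    then have "prob {x\<in>space M. s \<le> T (Suc m) x} = 1"
      by (subst prob_Collect_eq_1) auto
    then show ?thesis using True by (simp add: Phi_def)
  next
    case False
    then show ?thesis using step[OF Suc.IH] by simp
  qed
qed

end



definition G :: "nat \<Rightarrow> real \<Rightarrow> real" where
  "G m q = (\<Sum>l=1..m. dd m l * q ^ (l^2))"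

lemma G_deriv: "(G m has_real_derivative f_dens m q) (at q)"
proof -
  have "(G m has_real_derivative (\<Sum>l=1..m. dd m l * (real (l^2) * q ^ (l^2 - 1)))) (at q)"
    unfolding G_def[abs_def] by (auto intro!: derivative_eq_intros sum.cong simp: mult_ac)
  moreover have "(\<Sum>l=1..m. dd m l * (real (l^2) * q ^ (l^2 - 1))) = f_dens m q"
    unfolding f_dens_def dd_def sum_distrib_left by (rule sum.cong) (simp_all add: mult_ac)
  ultimately show ?thesis by simp
qed

lemma G_0: "m \<ge> 1 \<Longrightarrow> G m 0 = 0"
  unfolding G_def by (rule sum.neutral) (auto simp: power2_eq_square)

lemma G_1: "m \<ge> 1 \<Longrightarrow> G m 1 = 1"
  using sum_dd by (simp add: G_def)

context urn begin

lemma Y_cdf: assumes "m \<ge> 1"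
  shows "prob {x\<in>space M. exp (- T m x) \<le> q} = (if q < 0 then 0 else if q \<le> 1 then G m q else 1)"
proof (cases "q \<le> 0")
  case True
  then have "{x\<in>space M. exp (- T m x) \<le> q} = {}"
  proof (safe)
    fix x assume "exp (- T m x) \<le> q"
    with exp_gt_zero[of "- T m x"] True show "x \<in> {}" by linarith
  qed
  moreover have "q < 0 \<or> q = 0" using True by auto
  ultimately show ?thesis using G_0[OF assms] by (simp only:) auto
next
  case False
  then have "{x\<in>space M. exp (- T m x) \<le> q} = {x\<in>space M. - ln q \<le> T m x}"
    by (auto simp: ln_le_cancel_iff[symmetric] simp del: ln_le_cancel_iff) 
  then have "prob {x\<in>space M. exp (- T m x) \<le> q} = Phi m (- ln q)"
    by (simp add: T_tail)
  also have "\<dots> = (if q < 0 then 0 else if q \<le> 1 then G m q else 1)"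
  proof (cases "q < 1")
    case True
    have "exp (- (real l ^ 2) * - ln q) = q ^ (l^2)" for l
    proof -
      have "exp (- (real l ^ 2) * - ln q) = exp (real (l^2) * ln q)" by simp
      also have "\<dots> = exp (ln q) ^ (l^2)" by (rule exp_of_nat_mult)
      finally show ?thesis using False by simp
    qed
    then show ?thesis using True False by (simp add: Phi_def G_def)
  next
    case ge: False
    then show ?thesis using G_1[OF assms] False by (auto simp: Phi_def)
  qed
  finally show ?thesis .
qed

lemma G_mono: assumes "m \<ge> 1" shows "mono_on {0..1} (G m)"
proof (rule mono_onI)
  fix a b :: real assume ab: "a \<in> {0..1}" "b \<in> {0..1}" "a \<le> b"
  have "prob {x\<in>space M. exp (- T m x) \<le> a} \<le> prob {x\<in>space M. exp (- T m x) \<le> b}"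
    by (rule finite_measure_mono) (use ab in auto)
  then show "G m a \<le> G m b" using ab by (simp add: Y_cdf[OF assms])
qed

lemma f_nn: assumes "m \<ge> 1" "q \<in> {0<..<1}" shows "0 \<le> f_dens m q"
  by (rule mono_on_imp_deriv_nonneg[OF G_mono[OF assms(1)] G_deriv]) (use assms in simp)

lemma f_dens_meas[measurable]: "f_dens m \<in> borel_measurable borel"
  unfolding f_dens_def by measurable

lemma dens_Iic: assumes "m \<ge> 1"
  shows "emeasure (density lborel (\<lambda>q. ennreal (indicator {0..1} q * f_dens m q))) {..b}
     = ennreal (if b < 0 then 0 else if b \<le> 1 then G m b else 1)"
proof -
  have key: "(\<integral>\<^sup>+x. ennreal (indicator {0..1} x * f_dens m x) * indicator {..c} x \<partial>lborel) = ennreal (G m c)"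
    if c: "0 \<le> c" "c \<le> 1" for c
  proof -
    have "(\<integral>\<^sup>+x. ennreal (indicator {0..1} x * f_dens m x) * indicator {..c} x \<partial>lborel)
        = (\<integral>\<^sup>+x. ennreal (indicator {0<..<c} x * f_dens m x) \<partial>lborel)"
    proof (rule nn_integral_cong_AE)
      show "AE x in lborel. ennreal (indicator {0..1} x * f_dens m x) * indicator {..c} x = ennreal (indicator {0<..<c} x * f_dens m x)"
        using AE_lborel_singleton[of 0] AE_lborel_singleton[of c]
        by eventually_elim (use c in \<open>auto simp: indicator_def\<close>)
    qed
    also have "\<dots> = ennreal (G m c - G m 0)"
    proof (rule nn_integral_has_integral_lebesgue)
      show "\<And>x. x \<in> {0<..<c} \<Longrightarrow> 0 \<le> f_dens m x" using f_nn[OF assms] c by auto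
      have "(f_dens m has_integral G m c - G m 0) {0..c}"
        by (rule fundamental_theorem_of_calculus)
           (use c G_deriv in \<open>auto simp: has_real_derivative_iff_has_vector_derivative[symmetric] intro: has_field_derivative_at_within\<close>)
      then show "(f_dens m has_integral G m c - G m 0) {0<..<c}"
        by (simp add: has_integral_Icc_iff_Ioo)
    qed
    finally show ?thesis by (simp add: G_0[OF assms])
  qed
  show ?thesis
  proof (cases "b < 0")
    case True
    have "(\<integral>\<^sup>+x. ennreal (indicator {0..1} x * f_dens m x) * indicator {..b} x \<partial>lborel) = (\<integral>\<^sup>+x. 0 \<partial>(lborel::real measure))"
      by (rule nn_integral_cong) (use True in \<open>auto simp: indicator_def\<close>)
    then show ?thesis using True by (simp add: emeasure_density)
  next
    case nb: False
    show ?thesis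
    proof (cases "b \<le> 1")
      case True then show ?thesis using nb key[of b] by (simp add: emeasure_density)
    next
      case False
      have "(\<integral>\<^sup>+x. ennreal (indicator {0..1} x * f_dens m x) * indicator {..b} x \<partial>lborel) =
          (\<integral>\<^sup>+x. ennreal (indicator {0..1} x * f_dens m x) * indicator {..1} x \<partial>lborel)"
        by (rule nn_integral_cong) (use False in \<open>auto simp: indicator_def\<close>)
      then show ?thesis using False key[of 1] G_1[OF assms] by (simp add: emeasure_density)
    qed
  qed
qed

lemma part1: assumes "m \<ge> 1"
  shows "distr M borel (\<lambda>x. exp (- T m x)) = density lborel (\<lambda>q. ennreal (indicator {0..1} q * f_dens m q))"
    (is "?N1 = ?N2")
proof (rule cdf_unique)
  show "real_distribution ?N1" by (rule real_distribution_distr) simp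
  have tot: "emeasure ?N2 UNIV = 1"
  proof -
    have "emeasure ?N2 UNIV = emeasure ?N2 {..1}"
      by (simp add: emeasure_density) (auto intro!: nn_integral_cong simp: indicator_def)
    also have "\<dots> = 1" using dens_Iic[OF assms, of 1] G_1[OF assms] by simp
    finally show ?thesis .
  qed
  show "real_distribution ?N2"
    unfolding real_distribution_def
  proof
    show "prob_space ?N2" by (rule prob_spaceI) (use tot in simp)
  qed (simp add: real_distribution_axioms_def)
  show "cdf ?N1 = cdf ?N2"
  proof
    fix q
    have "cdf ?N1 q = prob {x\<in>space M. exp (- T m x) \<le> q}"
      unfolding cdf_def by (subst measure_distr) (auto intro!: arg_cong[where f=prob])
    also have "\<dots> = (if q < 0 then 0 else if q \<le> 1 then G m q else 1)" by (rule Y_cdf[OF assms])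
    also have "\<dots> = cdf ?N2 q"
      unfolding cdf_def measure_def dens_Iic[OF assms]
      using mono_onD[OF G_mono[OF assms], of 0 q] G_0[OF assms] by auto
    finally show "cdf ?N1 q = cdf ?N2 q" .
  qed
qed

end



definition Lq :: "real \<Rightarrow> real" where
  "Lq q = (\<Sum>l. 2 * (-1) ^ l * q ^ ((Suc l)^2))"

lemma pow_sq_le: "0 \<le> (q::real) \<Longrightarrow> q \<le> 1 \<Longrightarrow> q ^ ((Suc l)^2) \<le> q ^ (Suc l)"
  using power_decreasing[of "Suc l" "(Suc l)^2" q] by (auto simp: power2_eq_square)

lemma summable_sq: fixes q :: real assumes "0 \<le> q" "q < 1" shows "summable (\<lambda>l. q ^ ((Suc l)^2))"
proof (rule summable_comparison_test'[of "\<lambda>l. q ^ Suc l" 0])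
  show "summable (\<lambda>l. q ^ Suc l)" using assms by (simp add: summable_geometric)
  show "norm (q ^ ((Suc l)^2)) \<le> q ^ Suc l" for l using pow_sq_le[of q l] assms by simp
qed

lemma Theta_eq: assumes "0 \<le> q" "q < 1" shows "1 - Theta q = Lq q"
proof -
  define f :: "int \<Rightarrow> real" where "f = (\<lambda>n. (-1::real) ^ nat \<bar>n\<bar> * q ^ nat (n^2))"
  define b where "b = (\<lambda>l::nat. (-1::real) ^ Suc l * q ^ ((Suc l)^2))"
  have sb: "summable (\<lambda>l. norm (b l))"
    using summable_sq[OF assms] assms by (simp add: b_def abs_mult power_abs)
  have hb: "(b has_sum (\<Sum>l. b l)) UNIV"
    by (rule norm_summable_imp_has_sum[OF sb]) (use summable_norm_cancel[OF sb] in \<open>simp add: summable_sums\<close>)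
  have inj1: "inj (\<lambda>l::nat. int (Suc l))" by (auto simp: inj_def)
  have inj2: "inj (\<lambda>l::nat. - int (Suc l))" by (auto simp: inj_def)
  have nat1[simp]: "nat (1 + int x) = Suc x" for x by simp
  have nat2[simp]: "nat (int x + 1) = Suc x" for x by simp
  have nat3[simp]: "nat ((- 1 - int x)^2) = (Suc x)^2" for x
  proof -
    have "(- 1 - int x)^2 = int ((Suc x)^2)" by (simp add: power2_eq_square algebra_simps)
    then show ?thesis by (simp only: nat_int)
  qed
  have c1: "f \<circ> (\<lambda>l::nat. int (Suc l)) = b"
    by (auto simp: f_def b_def fun_eq_iff nat_power_eq)
  have c2: "f \<circ> (\<lambda>l::nat. - int (Suc l)) = b"
    by (auto simp: f_def b_def fun_eq_iff nat_power_eq)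
  have h1: "(f has_sum (\<Sum>l. b l)) (range (\<lambda>l::nat. int (Suc l)))"
    using hb by (subst has_sum_reindex[OF inj1]) (simp only: c1)
  have h2: "(f has_sum (\<Sum>l. b l)) (range (\<lambda>l::nat. - int (Suc l)))"
    using hb by (subst has_sum_reindex[OF inj2]) (simp only: c2)
  have h0: "(f has_sum 1) {0}" using has_sum_finite[of "{0}" f] by (simp add: f_def)
  have U: "UNIV = ({0} \<union> range (\<lambda>l::nat. int (Suc l))) \<union> range (\<lambda>l::nat. - int (Suc l))"
  proof -
    have "n \<in> ({0} \<union> range (\<lambda>l::nat. int (Suc l))) \<union> range (\<lambda>l::nat. - int (Suc l))" for n :: int
    proof (cases "n = 0")
      case False
      show ?thesis
      proof (cases "n > 0")
        case True
        then have "n = int (Suc (nat n - 1))" by simp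
        then show ?thesis by blast
      next
        case nn: False
        then have "n = - int (Suc (nat (-n) - 1))" using False by simp
        then show ?thesis by blast
      qed
    qed simp
    then show ?thesis by blast
  qed
  have "(f has_sum (1 + (\<Sum>l. b l) + (\<Sum>l. b l))) UNIV"
    unfolding U
    by (intro has_sum_Un_disjoint h0 h1 h2) auto
  then have "Theta q = 1 + 2 * (\<Sum>l. b l)"
    unfolding Theta_def f_def[symmetric] by (simp add: infsumI)
  moreover have "Lq q = - 2 * (\<Sum>l. b l)"
  proof -
    have "(\<lambda>l. 2 * (-1) ^ l * q ^ ((Suc l)^2)) = (\<lambda>l. (-2) * b l)" by (auto simp: b_def)
    then show ?thesis unfolding Lq_def using summable_norm_cancel[OF sb] by (simp add: suminf_mult suminf_minus)
  qed
  ultimately show ?thesis by simp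
qed

lemma G_lim: assumes "0 \<le> q" "q < 1" shows "(\<lambda>m. G m q) \<longlonglongrightarrow> Lq q"
proof -
  define a where "a = (\<lambda>l m. if l < m then dd m (Suc l) * q ^ ((Suc l)^2) else 0)"
  have Gs: "G m q = (\<Sum>l. a l m)" for m
  proof -
    have "(\<Sum>l. a l m) = (\<Sum>l<m. a l m)"
      by (rule suminf_finite) (auto simp: a_def)
    also have "\<dots> = (\<Sum>l<m. dd m (Suc l) * q ^ ((Suc l)^2))" by (simp add: a_def)
    also have "\<dots> = G m q" unfolding G_def by (simp add: sum.atLeast1_atMost_eq)
    finally show ?thesis by simp
  qed
  have "((\<lambda>m. \<Sum>l. a l m) \<longlongrightarrow> (\<Sum>l. 2 * (-1) ^ l * q ^ ((Suc l)^2))) sequentially"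
  proof (rule tannerys_theorem[THEN conjunct2, THEN conjunct2])
    fix l
    have "(\<lambda>m. 2 * (-1) ^ l * rr m (Suc l) * q ^ ((Suc l)^2)) \<longlonglongrightarrow> 2 * (-1) ^ l * 1 * q ^ ((Suc l)^2)"
      by (intro tendsto_intros rr_lim)
    then have "(\<lambda>m. 2 * (-1) ^ l * rr m (Suc l) * q ^ ((Suc l)^2)) \<longlonglongrightarrow> 2 * (-1) ^ l * q ^ ((Suc l)^2)"
      by simp
    then show "(\<lambda>m. a l m) \<longlonglongrightarrow> 2 * (-1) ^ l * q ^ ((Suc l)^2)"
      apply (rule Lim_transform_eventually)
      using eventually_gt_at_top[of l] by eventually_elim (auto simp: a_def dd_rr)
  next
    show "eventually (\<lambda>(l, m). norm (a l m) \<le> 2 * q ^ ((Suc l)^2)) (at_top \<times>\<^sub>F sequentially)"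
    proof (rule always_eventually, clarify)
      fix l m
      show "norm (a l m) \<le> 2 * q ^ ((Suc l)^2)"
      proof (cases "l < m")
        case True
        then have "0 \<le> rr m (Suc l)" "rr m (Suc l) \<le> 1" using rr_bounds[of "Suc l" m] by auto
        moreover have "rr m (Suc l) * q ^ ((Suc l)^2) \<le> 1 * q ^ ((Suc l)^2)"
          by (rule mult_right_mono) (use calculation assms in auto)
        ultimately show ?thesis using True assms
          by (auto simp: a_def dd_rr abs_mult power_abs)
      qed (auto simp: a_def assms)
    qed
    show "summable (\<lambda>l. 2 * q ^ ((Suc l)^2))" using summable_sq[OF assms] by simp
  qed simp
  then show ?thesis unfolding Lq_def Gs .
qed

lemma Lq_cont: assumes "0 \<le> r" "r < 1" shows "continuous_on {0..r} Lq"
proof -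
  have "uniform_limit {0..r} (\<lambda>n x. \<Sum>l<n. 2 * (-1) ^ l * x ^ ((Suc l)^2)) (\<lambda>x. \<Sum>l. 2 * (-1) ^ l * x ^ ((Suc l)^2)) sequentially"
  proof (rule Weierstrass_m_test)
    fix l and x :: real assume x: "x \<in> {0..r}"
    have "x ^ ((Suc l)^2) \<le> r ^ ((Suc l)^2)" using x by (auto intro: power_mono)
    then show "norm (2 * (-1) ^ l * x ^ ((Suc l)^2)) \<le> 2 * r ^ ((Suc l)^2)"
      using x by (simp add: abs_mult power_abs)
  next
    show "summable (\<lambda>l. 2 * r ^ ((Suc l)^2))" using summable_sq[OF assms] by simp
  qed
  then show ?thesis unfolding Lq_def[abs_def]
    by (rule uniform_limit_theorem[rotated]) (auto intro!: always_eventually continuous_intros)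
qed



context urn begin

definition S :: "'a \<Rightarrow> real" where
  "S x = (\<Sum>l. eps (Suc l) x / real (Suc l) ^ 2)"

lemma S_meas[measurable]: "S \<in> borel_measurable M"
  unfolding S_def by measurable

lemma eps_int: "(\<integral>\<^sup>+x. ennreal (eps l x) \<partial>M) = 1"
proof -
  have "integrable M (\<lambda>x. eps l x ^ 1)"
    by (rule erlang_ith_moment_integrable[OF _ expo]) simp
  then have "integrable M (eps l)" by simp
  then have "(\<integral>\<^sup>+x. ennreal (eps l x) \<partial>M) = ennreal (expectation (eps l))"
    by (rule nn_integral_eq_integral) (rule eps_nonneg)
  also have "expectation (eps l) = 1"
    using exponential_distributed_expectation[OF _ expo[of l]] by simp
  finally show ?thesis by simp
qed

lemma ae_summable: "AE x in M. summable (\<lambda>l. eps (Suc l) x / real (Suc l) ^ 2)"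
proof -
  define g where "g = (\<lambda>x. \<Sum>l. ennreal (eps (Suc l) x / real (Suc l) ^ 2))"
  have [measurable]: "g \<in> borel_measurable M" unfolding g_def by measurable
  have c: "summable (\<lambda>l. 1 / real (Suc l) ^ 2)"
  proof -
    have "summable (\<lambda>n. 1 / real n ^ 2)"
      using inverse_power_summable[of 2, where 'a=real] by (simp add: inverse_eq_divide)
    then have "summable (\<lambda>n. 1 / real (Suc n) ^ 2)"
      by (subst summable_Suc_iff[where f="\<lambda>n. 1 / real n ^ 2"])
    then show ?thesis .
  qed
  have "integral\<^sup>N M g = (\<Sum>l. \<integral>\<^sup>+x. ennreal (eps (Suc l) x / real (Suc l) ^ 2) \<partial>M)"
    unfolding g_def by (rule nn_integral_suminf) measurable
  also have "\<dots> = (\<Sum>l. ennreal (1 / real (Suc l) ^ 2))"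
  proof (rule suminf_cong)
    fix l
    have "(\<integral>\<^sup>+x. ennreal (eps (Suc l) x / real (Suc l) ^ 2) \<partial>M) = (\<integral>\<^sup>+x. ennreal (eps (Suc l) x) * ennreal (1 / real (Suc l) ^ 2) \<partial>M)"
    proof (rule nn_integral_cong)
      fix x
      have "eps (Suc l) x / real (Suc l) ^ 2 = eps (Suc l) x * (1 / real (Suc l) ^ 2)" by simp
      also have "ennreal \<dots> = ennreal (eps (Suc l) x) * ennreal (1 / real (Suc l) ^ 2)"
        by (rule ennreal_mult'') simp
      finally show "ennreal (eps (Suc l) x / real (Suc l) ^ 2) = ennreal (eps (Suc l) x) * ennreal (1 / real (Suc l) ^ 2)" .
    qed
    also have "\<dots> = ennreal (1 / real (Suc l) ^ 2)"
      by (simp add: nn_integral_multc eps_int)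
    finally show "(\<integral>\<^sup>+x. ennreal (eps (Suc l) x / real (Suc l) ^ 2) \<partial>M) = ennreal (1 / real (Suc l) ^ 2)" .
  qed
  also have "\<dots> = ennreal (\<Sum>l. 1 / real (Suc l) ^ 2)"
    by (rule suminf_ennreal2) (use c in auto)
  finally have "integral\<^sup>N M g \<noteq> \<infinity>" by simp
  from nn_integral_noteq_infinite[OF _ this] have "AE x in M. g x \<noteq> \<infinity>" by simp
  then show ?thesis using eps_nonneg_all
    by eventually_elim (auto simp: g_def intro!: summable_suminf_not_top)
qed

lemma T_alt: "T m x = (\<Sum>l<m. eps (Suc l) x / real (Suc l) ^ 2)"
  unfolding T_def by (simp add: sum.atLeast1_atMost_eq del: of_nat_Suc)

definition good :: "'a \<Rightarrow> bool" where
  "good x \<longleftrightarrow> (\<forall>l. 0 \<le> eps l x) \<and> summable (\<lambda>l. eps (Suc l) x / real (Suc l) ^ 2)"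

lemma ae_good: "AE x in M. good x"
  using eps_nonneg_all ae_summable by eventually_elim (simp add: good_def)

lemma good_T_le_S: "good x \<Longrightarrow> T m x \<le> S x"
  unfolding good_def T_alt S_def by (auto intro!: sum_le_suminf)

lemma good_T_mono: "good x \<Longrightarrow> m \<le> m' \<Longrightarrow> T m x \<le> T m' x"
  unfolding good_def T_alt by (auto intro!: sum_mono2)

lemma good_T_lim: "good x \<Longrightarrow> (\<lambda>m. T m x) \<longlonglongrightarrow> S x"
  unfolding good_def T_alt S_def by (auto intro!: summable_LIMSEQ)

lemma good_S_nonneg: "good x \<Longrightarrow> 0 \<le> S x"
  unfolding good_def S_def by (auto intro!: suminf_nonneg)

lemma part2: "AE x in M. exp (- S x) \<in> {0..1}"
  using ae_good by eventually_elim (auto dest: good_S_nonneg)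

lemma upper: assumes "0 \<le> q" "q < q'" "q' < 1"
  shows "prob {x\<in>space M. exp (- S x) \<le> q} \<le> Lq q'"
proof -
  define A where "A = (\<lambda>m. \<Union>k\<le>m. {x\<in>space M. exp (- T k x) \<le> q'})"
  have As: "A m \<in> sets M" for m unfolding A_def by measurable
  have inc: "incseq A" unfolding A_def incseq_def by (auto; meson atMost_iff le_trans)
  have mA: "measure M (A m) = G m q'" if "m \<ge> 1" for m
  proof -
    have "measure M (A m) = prob {x\<in>space M. exp (- T m x) \<le> q'}"
    proof (rule finite_measure_eq_AE)
      show "AE x in M. (x \<in> A m) = (x \<in> {x \<in> space M. exp (- T m x) \<le> q'})"
        using ae_good
      proof eventually_elim
        case (elim x)
        have "exp (- T m x) \<le> exp (- T k x)" if "k \<le> m" for k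
          using good_T_mono[OF elim that] by simp
        then show ?case unfolding A_def by auto (meson exp_le_cancel_iff neg_le_iff_le order.trans)
      qed
    qed (use As in auto)
    also have "\<dots> = G m q'" using Y_cdf[OF that, of q'] assms by simp
    finally show ?thesis .
  qed
  have "(\<lambda>m. measure M (A m)) \<longlonglongrightarrow> measure M (\<Union>m. A m)"
    by (rule finite_Lim_measure_incseq) (use As inc in auto)
  moreover have "(\<lambda>m. measure M (A m)) \<longlonglongrightarrow> Lq q'"
  proof -
    have "eventually (\<lambda>m. G m q' = measure M (A m)) sequentially"
      using eventually_ge_at_top[of 1] by eventually_elim (simp add: mA)
    from Lim_transform_eventually[OF G_lim[of q'] this] show ?thesis using assms by simp
  qed
  ultimately have U: "measure M (\<Union>m. A m) = Lq q'" by (rule LIMSEQ_unique)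
  have "prob {x\<in>space M. exp (- S x) \<le> q} \<le> measure M (\<Union>m. A m)"
  proof (rule finite_measure_mono_AE)
    show "AE x in M. x \<in> {x \<in> space M. exp (- S x) \<le> q} \<longrightarrow> x \<in> (\<Union>m. A m)"
      using ae_good
    proof eventually_elim
      case (elim x)
      show ?case
      proof
        assume x: "x \<in> {x \<in> space M. exp (- S x) \<le> q}"
        have "(\<lambda>m. exp (- T m x)) \<longlonglongrightarrow> exp (- S x)"
          by (intro tendsto_intros good_T_lim[OF elim])
        moreover have "exp (- S x) < q'" using x assms by auto
        ultimately have "eventually (\<lambda>m. exp (- T m x) < q') sequentially"
          by (rule order_tendstoD)
        then obtain m where m': "exp (- T m x) < q'" by (auto dest: eventually_happens)
        have "x \<in> A m" unfolding A_def using x m' by (intro UN_I[of m]) auto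
        then show "x \<in> (\<Union>m. A m)" by blast
      qed
    qed
    show "(\<Union>m. A m) \<in> sets M" using As by auto
  qed
  then show ?thesis using U by simp
qed

lemma lower: assumes "0 \<le> q" "q < 1"
  shows "Lq q \<le> prob {x\<in>space M. exp (- S x) \<le> q}"
proof (rule LIMSEQ_le_const2[OF G_lim[OF assms]])
  show "\<exists>N. \<forall>m\<ge>N. G m q \<le> prob {x\<in>space M. exp (- S x) \<le> q}"
  proof (intro exI allI impI)
    fix m :: nat assume m: "m \<ge> 1"
    have "prob {x\<in>space M. exp (- T m x) \<le> q} \<le> prob {x\<in>space M. exp (- S x) \<le> q}"
    proof (rule finite_measure_mono_AE)
      show "AE x in M. x \<in> {x \<in> space M. exp (- T m x) \<le> q} \<longrightarrow> x \<in> {x\<in>space M. exp (- S x) \<le> q}"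
        using ae_good by eventually_elim (use good_T_le_S in \<open>auto intro: order.trans[rotated]\<close>)
    qed measurable
    then show "G m q \<le> prob {x\<in>space M. exp (- S x) \<le> q}"
      using Y_cdf[OF m, of q] assms by simp
  qed
qed

lemma part3: assumes "0 \<le> q" "q < 1"
  shows "prob {x\<in>space M. exp (- S x) \<le> q} = 1 - Theta q"
proof -
  define r where "r = (1 + q) / 2"
  define qk where "qk = (\<lambda>k::nat. q + (1 - q) / (real k + 2))"
  have qk: "q < qk k" "qk k < 1" "qk k \<le> r" for k
  proof -
    have p: "0 < (1-q)/(real k+2)" using assms by simp
    have le: "(1 - q)/(real k+2) \<le> (1-q)/2" by (rule divide_left_mono) (use assms in auto)
    have h: "(1-q)/2 < 1 - q" using assms by simp
    have r2: "r = q + (1-q)/2" unfolding r_def by (simp add: field_simps)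
    show "q < qk k" "qk k < 1" using p le h assms unfolding qk_def by linarith+
    show "qk k \<le> r" unfolding r2 qk_def using le by simp
  qed
  have "qk \<longlonglongrightarrow> q + 0"
    unfolding qk_def by (intro tendsto_intros) real_asymp
  then have lim: "qk \<longlonglongrightarrow> q" by simp
  have "(\<lambda>k. Lq (qk k)) \<longlonglongrightarrow> Lq q"
  proof -
    have r: "0 \<le> r" "r < 1" "q \<le> r" using assms by (simp_all add: r_def)
    have ev: "eventually (\<lambda>k. qk k \<in> {0..r}) sequentially"
    proof (rule always_eventually, rule allI)
      fix k show "qk k \<in> {0..r}" using qk(1)[of k] qk(3)[of k] assms by auto
    qed
    show ?thesis
      by (rule continuous_on_tendsto_compose[OF Lq_cont[OF r(1,2)] lim _ ev]) (use r assms in auto)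
  qed
  moreover have "prob {x\<in>space M. exp (- S x) \<le> q} \<le> Lq (qk k)" for k
    by (rule upper) (use assms qk in auto)
  ultimately have "prob {x\<in>space M. exp (- S x) \<le> q} \<le> Lq q"
    by (intro LIMSEQ_le_const) auto
  moreover have "Lq q \<le> prob {x\<in>space M. exp (- S x) \<le> q}" by (rule lower[OF assms])
  ultimately show ?thesis using Theta_eq[OF assms] by simp
qed

end

theorem corollary6:
  fixes M :: "'a measure" and eps :: "nat \<Rightarrow> 'a \<Rightarrow> real"
  assumes "prob_space M"
    and "prob_space.indep_vars M (\<lambda>_. borel) eps UNIV"
    and "\<And>l. distributed M lborel (eps l) (exponential_density 1)"
  shows "(\<forall>m\<ge>1. distr M borel (\<lambda>x. exp (- (\<Sum>l=1..m. eps l x / real l ^ 2)))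
              = density lborel (\<lambda>q. ennreal (indicator {0..1} q * f_dens m q)))
    \<and> (AE x in M. exp (- (\<Sum>l. eps (Suc l) x / real (Suc l) ^ 2)) \<in> {0..1})
    \<and> (\<forall>q. 0 \<le> q \<and> q < 1 \<longrightarrow>
           measure M {x \<in> space M. exp (- (\<Sum>l. eps (Suc l) x / real (Suc l) ^ 2)) \<le> q}
             = 1 - Theta q)"
proof -
  interpret urn M eps
    using assms by (simp add: urn_def urn_axioms_def)
  show ?thesis
  proof (intro conjI allI impI)
    fix m :: nat assume "1 \<le> m"
    then show "distr M borel (\<lambda>x. exp (- (\<Sum>l=1..m. eps l x / real l ^ 2)))
              = density lborel (\<lambda>q. ennreal (indicator {0..1} q * f_dens m q))"
      using part1 by (simp add: T_def[abs_def])
  next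
    show "AE x in M. exp (- (\<Sum>l. eps (Suc l) x / real (Suc l) ^ 2)) \<in> {0..1}"
      using part2 by (simp add: S_def)
  next
    fix q :: real assume "0 \<le> q \<and> q < 1"
    then show "measure M {x \<in> space M. exp (- (\<Sum>l. eps (Suc l) x / real (Suc l) ^ 2)) \<le> q} = 1 - Theta q"
      using part3 by (simp add: S_def)
  qed
qed

end
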